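(* Let $G$, $\mu$, $H_0,\dots,H_M$ be as in the context, and let $(Q_{n+1},P_{n+1})=\Phi_h(Q_n,P_n)$ be the stochastic implicit midpoint integrator defined in the context. Then for any initial value $(Q_0,P_0)\in T^*G$ there exists $R(Q_0,P_0)<\infty$ such that almost surely $$\sup_{h>0}\ \sup_{n\ge 0}\ \|(Q_n,P_n)\|\le R(Q_0,P_0).$$
   Context: $G\subseteq\operatorname{GL}(n,\mathbb{C})$ is a compact simply connected matrix Lie group with $J$-quadratic Lie algebra $\mathfrak{g}$: there is a matrix $J$ with $J^*=\pm J$, $J^2=cI_n$ ($c\in\mathbb{R}\setminus\{0\}$) and $A^*J+JA=0$ for all $A\in\mathfrak{g}$ ($A^*$ = conjugate transpose). $\mathfrak{g}^*$ is identified with $\mathfrak{g}$ via $\langle X,V\rangle=\operatorname{Tr}(X^*V)$ with norm $\|\cdot\|$ (Frobenius); gradients are w.r.t. this inner product. The momentum map is $\mu(Q,P)=\tfrac12Q^*P-\tfrac1{2c}JP^*QJ$. $H_0,\dots,H_M:\mathfrak{g}^*\to\mathbb{R}$ are differentiable. Set $f_i(Q,P)=\tfrac12Q\nabla H_i(\mu(Q,P))$, $k_i(Q,P)=-\tfrac12P\nabla H_i(\mu(Q,P))^*$. Truncated noise: for each $i$ and step $n$, $\xi\sim\mathcal N(0,1)$ with $\xi\sqrt h=W^i(t_n+h)-W^i(t_n)$ ($W^i$ independent Brownian motions), $A_h=\sqrt{2l|\log h|}$ for a fixed positive integer $l$, and $(\zeta_i)_n$ is $\xi$ clipped to $[-A_h,A_h]$.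 The integrator: given $(Q_n,P_n)$, find $(\tilde Q,\tilde P)$ with $Q_n=\tilde Q-\tfrac12(f_0(\tilde Q,\tilde P)h+\sum_i f_i(\tilde Q,\tilde P)(\zeta_i)_n\sqrt h)$, $P_n=\tilde P-\tfrac12(k_0(\tilde Q,\tilde P)h+\sum_ik_i(\tilde Q,\tilde P)(\zeta_i)_n\sqrt h)$, and set $Q_{n+1}=\tilde Q+\tfrac12(f_0h+\sum_if_i(\zeta_i)_n\sqrt h)$, $P_{n+1}=\tilde P+\tfrac12(k_0h+\sum_ik_i(\zeta_i)_n\sqrt h)$, all evaluated at $(\tilde Q,\tilde P)$. *)

theory Defs
  imports "HOL-Analysis.Analysis" "HOL-Probability.Probability"
begin

type_synonym 'n cmat = "complex^'n^'n"

definition ctrans :: "'n::finite cmat \<Rightarrow> 'n cmat" where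
  "ctrans A = (\<chi> i j. cnj (A $ j $ i))"

primrec mpow :: "'n::finite cmat \<Rightarrow> nat \<Rightarrow> 'n cmat" where
  "mpow A 0 = mat 1"
| "mpow A (Suc k) = A ** mpow A k"

definition mexp :: "'n::finite cmat \<Rightarrow> 'n cmat" where
  "mexp A = (\<Sum>k. inverse (fact k) *\<^sub>R mpow A k)"

definition matrix_lie_group :: "'n::finite cmat set \<Rightarrow> bool" where
  "matrix_lie_group G \<longleftrightarrow> G \<subseteq> {A. invertible A} \<and> mat 1 \<in> G \<and>
     (\<forall>A\<in>G. \<forall>B\<in>G. A ** B \<in> G) \<and> (\<forall>A\<in>G. matrix_inv A \<in> G) \<and> closed G"

definition lie_algebra :: "'n::finite cmat set \<Rightarrow> 'n cmat set" where
  "lie_algebra G = {A. \<forall>t::real. mexp (t *\<^sub>R A) \<in> G}"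

text \<open>The pairing <X,V> = Tr(X^* V); as a real inner product we use its real part.\<close>
definition frob :: "'n::finite cmat \<Rightarrow> 'n cmat \<Rightarrow> complex" where
  "frob X V = trace (ctrans X ** V)"

definition momentum :: "'n::finite cmat \<Rightarrow> real \<Rightarrow> 'n cmat \<Rightarrow> 'n cmat \<Rightarrow> 'n cmat" where
  "momentum J c Q P = (1/2) *\<^sub>R (ctrans Q ** P) - (1/(2*c)) *\<^sub>R (J ** ctrans P ** Q ** J)"

definition fvec :: "'n::finite cmat \<Rightarrow> real \<Rightarrow> (nat \<Rightarrow> 'n cmat \<Rightarrow> 'n cmat) \<Rightarrow> nat \<Rightarrow>
    'n cmat \<Rightarrow> 'n cmat \<Rightarrow> 'n cmat" where
  "fvec J c gradH i Q P = (1/2) *\<^sub>R (Q ** gradH i (momentum J c Q P))"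

definition kvec :: "'n::finite cmat \<Rightarrow> real \<Rightarrow> (nat \<Rightarrow> 'n cmat \<Rightarrow> 'n cmat) \<Rightarrow> nat \<Rightarrow>
    'n cmat \<Rightarrow> 'n cmat \<Rightarrow> 'n cmat" where
  "kvec J c gradH i Q P = - ((1/2) *\<^sub>R (P ** ctrans (gradH i (momentum J c Q P))))"

definition midpoint_step :: "'n::finite cmat \<Rightarrow> real \<Rightarrow> (nat \<Rightarrow> 'n cmat \<Rightarrow> 'n cmat) \<Rightarrow> nat \<Rightarrow>
    real \<Rightarrow> (nat \<Rightarrow> real) \<Rightarrow> 'n cmat \<Rightarrow> 'n cmat \<Rightarrow> 'n cmat \<Rightarrow> 'n cmat \<Rightarrow> bool" where
  "midpoint_step J c gradH M h zeta Q P Q' P' \<longleftrightarrow>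
     (\<exists>Qt Pt.
        let F = h *\<^sub>R fvec J c gradH 0 Qt Pt
                + (\<Sum>i\<in>{1..M}. (zeta i * sqrt h) *\<^sub>R fvec J c gradH i Qt Pt);
            K = h *\<^sub>R kvec J c gradH 0 Qt Pt
                + (\<Sum>i\<in>{1..M}. (zeta i * sqrt h) *\<^sub>R kvec J c gradH i Qt Pt)
        in Q = Qt - (1/2) *\<^sub>R F \<and> P = Pt - (1/2) *\<^sub>R K \<and>
           Q' = Qt + (1/2) *\<^sub>R F \<and> P' = Pt + (1/2) *\<^sub>R K)"

definition trunc_level :: "nat \<Rightarrow> real \<Rightarrow> real" where
  "trunc_level l h = sqrt (2 * real l * \<bar>ln h\<bar>)"

definition trunc_noise :: "nat \<Rightarrow> (nat \<Rightarrow> real \<Rightarrow> 'a \<Rightarrow> real) \<Rightarrow> real \<Rightarrow> 'a \<Rightarrow> nat \<Rightarrow> nat \<Rightarrow> real" where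
  "trunc_noise l W h \<omega> n i =
     (let \<xi> = (W i (real n * h + h) \<omega> - W i (real n * h) \<omega>) / sqrt h;
          A = trunc_level l h
      in max (- A) (min A \<xi>))"

definition integrator_seq :: "'n::finite cmat \<Rightarrow> real \<Rightarrow> (nat \<Rightarrow> 'n cmat \<Rightarrow> 'n cmat) \<Rightarrow> nat \<Rightarrow>
    nat \<Rightarrow> (nat \<Rightarrow> real \<Rightarrow> 'a \<Rightarrow> real) \<Rightarrow> real \<Rightarrow> 'a \<Rightarrow>
    (nat \<Rightarrow> 'n cmat) \<Rightarrow> (nat \<Rightarrow> 'n cmat) \<Rightarrow> bool" where
  "integrator_seq J c gradH M l W h \<omega> Q P \<longleftrightarrow>
     (\<forall>n. midpoint_step J c gradH M h (trunc_noise l W h \<omega> n) (Q n) (P n) (Q (Suc n)) (P (Suc n)))"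

definition brownian_motion :: "'a measure \<Rightarrow> (real \<Rightarrow> 'a \<Rightarrow> real) \<Rightarrow> bool" where
  "brownian_motion PS B \<longleftrightarrow>
     prob_space PS \<and>
     (\<forall>t. B t \<in> borel_measurable PS) \<and>
     (AE \<omega> in PS. B 0 \<omega> = 0) \<and>
     (AE \<omega> in PS. continuous_on {0..} (\<lambda>t. B t \<omega>)) \<and>
     (\<forall>s t. 0 \<le> s \<and> s < t \<longrightarrow>
        distributed PS lborel (\<lambda>\<omega>. B t \<omega> - B s \<omega>) (normal_density 0 (sqrt (t - s)))) \<and>
     (\<forall>ts::real list. sorted_wrt (<) ts \<and> (\<forall>t\<in>set ts. 0 \<le> t) \<longrightarrow>
        prob_space.indep_vars PS (\<lambda>_. borel)
          (\<lambda>k \<omega>. B (ts ! Suc k) \<omega> - B (ts ! k) \<omega>) {..<length ts - 1})"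

definition indep_brownian :: "'a measure \<Rightarrow> nat \<Rightarrow> (nat \<Rightarrow> real \<Rightarrow> 'a \<Rightarrow> real) \<Rightarrow> bool" where
  "indep_brownian PS M W \<longleftrightarrow>
     prob_space PS \<and> (\<forall>i\<in>{1..M}. brownian_motion PS (W i)) \<and>
     prob_space.indep_vars PS (\<lambda>_. Pi\<^sub>M (UNIV :: real set) (\<lambda>_. borel))
        (\<lambda>i \<omega>. \<lambda>t. W i t \<omega>) {1..M}"

end

theory Submission
  imports Defs
begin

lemma norm_sq_vec: "norm (x::'a::real_inner^'n) ^ 2 = (\<Sum>i\<in>UNIV. norm (x$i) ^ 2)"
  by (simp add: power2_norm_eq_inner inner_vec_def)

lemma norm_sq_cmat: "norm (A::'n::finite cmat) ^ 2 = (\<Sum>i\<in>UNIV. \<Sum>j\<in>UNIV. cmod (A$i$j) ^ 2)"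
  by (simp add: norm_sq_vec)

lemma cs_complex:
  fixes a b :: "'k \<Rightarrow> complex"
  shows "cmod (\<Sum>k\<in>K. a k * b k) ^ 2 \<le> (\<Sum>k\<in>K. cmod (a k) ^ 2) * (\<Sum>k\<in>K. cmod (b k) ^ 2)"
proof -
  have "cmod (\<Sum>k\<in>K. a k * b k) \<le> (\<Sum>k\<in>K. \<bar>cmod (a k)\<bar> * \<bar>cmod (b k)\<bar>)"
    by (simp add: norm_mult order_trans[OF norm_sum])
  also have "\<dots> \<le> L2_set (\<lambda>k. cmod (a k)) K * L2_set (\<lambda>k. cmod (b k)) K"
    by (rule L2_set_mult_ineq)
  finally have 1: "cmod (\<Sum>k\<in>K. a k * b k) \<le> L2_set (\<lambda>k. cmod (a k)) K * L2_set (\<lambda>k. cmod (b k)) K" .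
  have "cmod (\<Sum>k\<in>K. a k * b k) ^ 2 \<le> (L2_set (\<lambda>k. cmod (a k)) K * L2_set (\<lambda>k. cmod (b k)) K) ^ 2"
    by (rule power_mono[OF 1]) simp
  also have "\<dots> = (\<Sum>k\<in>K. cmod (a k) ^ 2) * (\<Sum>k\<in>K. cmod (b k) ^ 2)"
    by (simp add: power_mult_distrib L2_set_def sum_nonneg)
  finally show ?thesis .
qed

lemma norm_mult_le: "norm ((A::'n::finite cmat) ** (B::'n cmat)) \<le> norm A * norm B"
proof -
  have "norm (A ** B) ^ 2 = (\<Sum>i\<in>UNIV. \<Sum>j\<in>UNIV. cmod (\<Sum>k\<in>UNIV. A$i$k * B$k$j) ^ 2)"
    by (subst norm_sq_cmat) (simp add: matrix_matrix_mult_def)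
  also have "\<dots> \<le> (\<Sum>i\<in>UNIV. \<Sum>j\<in>UNIV. (\<Sum>k\<in>UNIV. cmod (A$i$k) ^ 2) * (\<Sum>k\<in>UNIV. cmod (B$k$j) ^ 2))"
    by (rule sum_mono, rule sum_mono, rule cs_complex)
  also have "\<dots> = (\<Sum>i\<in>UNIV. \<Sum>k\<in>UNIV. cmod (A$i$k) ^ 2) * (\<Sum>j\<in>UNIV. \<Sum>k\<in>UNIV. cmod (B$k$j) ^ 2)"
    by (rule sum_product[symmetric])
  also have "\<dots> = (norm A * norm B) ^ 2"
  proof -
    have "(\<Sum>j\<in>UNIV. \<Sum>k\<in>UNIV. cmod (B$k$j) ^ 2) = (\<Sum>k\<in>UNIV. \<Sum>j\<in>UNIV. cmod (B$k$j) ^ 2)"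
      by (rule sum.swap)
    then show ?thesis by (simp only: power_mult_distrib norm_sq_cmat)
  qed
  finally have "norm (A ** B) ^ 2 \<le> (norm A * norm B) ^ 2" .
  then show ?thesis by (rule power2_le_imp_le) simp
qed

lemma ctrans_ctrans[simp]: "ctrans (ctrans A) = A"
  by (simp add: ctrans_def vec_eq_iff)

lemma ctrans_mult: "ctrans ((A::'n::finite cmat) ** B) = ctrans B ** ctrans A"
  by (simp add: ctrans_def matrix_matrix_mult_def vec_eq_iff mult.commute)

lemma ctrans_add[simp]: "ctrans (A + B) = ctrans A + ctrans B"
  by (simp add: ctrans_def vec_eq_iff)

lemma ctrans_diff[simp]: "ctrans (A - B) = ctrans A - ctrans B"
  by (simp add: ctrans_def vec_eq_iff)

lemma ctrans_uminus[simp]: "ctrans (- A) = - ctrans A"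
  by (simp add: ctrans_def vec_eq_iff)

lemma ctrans_zero[simp]: "ctrans 0 = 0"
  by (simp add: ctrans_def vec_eq_iff)

lemma ctrans_scaleR[simp]: "ctrans (r *\<^sub>R A) = r *\<^sub>R ctrans A"
  by (simp add: ctrans_def vec_eq_iff)

lemma ctrans_sum: "ctrans (sum f S) = (\<Sum>x\<in>S. ctrans (f x))"
  by (induction S rule: infinite_finite_induct) auto

lemma ctrans_mat1[simp]: "ctrans (mat 1 :: 'n::finite cmat) = mat 1"
  by (simp add: ctrans_def mat_def vec_eq_iff)

lemma norm_ctrans[simp]: "norm (ctrans (A::'n::finite cmat)) = norm A"
proof -
  have "norm (ctrans A) ^ 2 = norm A ^ 2"
    unfolding norm_sq_cmat ctrans_def by (simp add: sum.swap[where A=UNIV and B=UNIV and g="\<lambda>i j. cmod (A$j$i) ^ 2"])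
  then show ?thesis by (simp add: power2_eq_iff_nonneg)
qed

lemma bounded_linear_ctrans: "bounded_linear (ctrans :: 'n::finite cmat \<Rightarrow> 'n cmat)"
  by (rule bounded_linear_intro[where K=1]) auto

lemma trace_frob: "Re (trace ((Y::'n::finite cmat) ** ctrans Y)) = norm Y ^ 2"
proof -
  have "trace (Y ** ctrans Y) = (\<Sum>i\<in>UNIV. \<Sum>k\<in>UNIV. Y$i$k * cnj (Y$i$k))"
    by (simp add: trace_def matrix_matrix_mult_def ctrans_def)
  then show ?thesis
    by (simp add: norm_sq_cmat Re_sum complex_mult_cnj cmod_power2 flip: of_real_power)
qed

lemma trace_scaleR: "trace (r *\<^sub>R (A::'n::finite cmat)) = r *\<^sub>R trace A"
  by (simp add: trace_def scaleR_sum_right)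

lemma matrix_add_rdistrib: "((A::'n::finite cmat) + B) ** C = A ** C + B ** C"
  by (vector matrix_matrix_mult_def sum.distrib[symmetric] field_simps)

lemma matrix_diff_ldistrib: "(A::'n::finite cmat) ** (B - C) = A ** B - A ** C"
  by (vector matrix_matrix_mult_def sum_subtractf[symmetric] field_simps)

lemma matrix_diff_rdistrib: "((A::'n::finite cmat) - B) ** C = A ** C - B ** C"
  by (vector matrix_matrix_mult_def sum_subtractf[symmetric] field_simps)

lemma matrix_neg_l: "(- (A::'n::finite cmat)) ** B = - (A ** B)"
  by (vector matrix_matrix_mult_def sum_negf[symmetric])

lemma matrix_neg_r: "(A::'n::finite cmat) ** (- B) = - (A ** B)"
  by (vector matrix_matrix_mult_def sum_negf[symmetric])

lemma matrix_sum_l: "(sum f S :: 'n::finite cmat) ** (B::'n cmat) = (\<Sum>x\<in>S. f x ** B)"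
  by (induction S rule: infinite_finite_induct) (auto simp: matrix_add_rdistrib)

lemma matrix_sum_r: "(B::'n::finite cmat) ** (sum f S :: 'n cmat) = (\<Sum>x\<in>S. B ** f x)"
  by (induction S rule: infinite_finite_induct) (auto simp: matrix_add_ldistrib)

lemma bounded_bilinear_mmult: "bounded_bilinear ((**) :: 'n::finite cmat \<Rightarrow> 'n cmat \<Rightarrow> 'n cmat)"
  apply (rule bounded_bilinear.intro)
  apply (auto simp: matrix_add_ldistrib matrix_add_rdistrib scalar_matrix_assoc matrix_scalar_ac)
  apply (rule exI[where x=1]) apply (simp add: norm_mult_le)
  done

lemmas mm_simps = matrix_add_ldistrib matrix_add_rdistrib matrix_diff_ldistrib matrix_diff_rdistrib
  matrix_neg_l matrix_neg_r scalar_matrix_assoc[symmetric] matrix_scalar_ac matrix_mul_assoc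

lemma norm_sq_convex:
  fixes a b :: "'a::real_inner"
  shows "norm ((1-u) *\<^sub>R a + u *\<^sub>R b) ^ 2 = (1-u) * norm a ^ 2 + u * norm b ^ 2 - u * (1-u) * norm (a - b) ^ 2"
  by (simp add: power2_norm_eq_inner inner_add_left inner_add_right inner_diff_left inner_diff_right
      inner_commute algebra_simps)

lemma triple_bound:
  fixes g X :: "'n::finite cmat"
  assumes "norm g \<le> K"
  shows "norm (ctrans g ** X ** g) \<le> K * K * norm X"
proof -
  have "norm (ctrans g ** X ** g) \<le> norm (ctrans g ** X) * norm g" by (rule norm_mult_le)
  also have "\<dots> \<le> (norm g * norm X) * norm g"
    using norm_mult_le[of "ctrans g" X] by (intro mult_right_mono) simp_all
  also have "\<dots> \<le> (K * norm X) * K"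
  proof -
    have K0: "0 \<le> K" using assms norm_ge_zero order_trans by blast
    show ?thesis using assms K0 by (intro mult_mono mult_right_mono) auto
  qed
  finally show ?thesis by (simp add: mult_ac)
qed

lemma aux_ineq: "(a::real) \<le> fa \<Longrightarrow> b \<le> fb \<Longrightarrow> d \<le> n \<Longrightarrow>
   1/2*a + 1/2*b - 1/4*n \<le> (fa + fb)/2 - d/(4::real)"
  by (simp add: field_simps)

lemma invariant_form:
  fixes G :: "'n::finite cmat set"
  assumes cG: "compact G" and oneG: "mat 1 \<in> G" and mulG: "\<forall>g\<in>G. \<forall>h\<in>G. g ** h \<in> G"
    and invG: "\<forall>g\<in>G. \<exists>h\<in>G. h ** g = mat 1 \<and> g ** h = mat 1"
  shows "\<exists>S \<epsilon>. \<epsilon> > 0 \<and> (\<forall>g\<in>G. ctrans g ** S ** g = S) \<and>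
           (\<forall>X. \<epsilon> * norm X ^ 2 \<le> Re (trace (X ** S ** ctrans X)))"
proof -
  obtain K where K: "K > 0" "\<forall>g\<in>G. norm g \<le> K"
    using compact_imp_bounded[OF cG] bounded_pos by blast
  define \<phi> where "\<phi> (g::'n cmat) (X::'n cmat) = norm (ctrans g ** X ** g) ^ 2" for g X
  have \<phi>le: "\<phi> g X \<le> (K*K*norm X)^2" if "g \<in> G" for g X
    unfolding \<phi>_def using triple_bound[of g K X] K that by (intro power_mono) auto
  define f where "f X = Sup ((\<lambda>g. \<phi> g X) ` G)" for X
  have bdd: "bdd_above ((\<lambda>g. \<phi> g X) ` G)" for X
    using \<phi>le by (intro bdd_aboveI2) blast
  have f_ge: "\<phi> g X \<le> f X" if "g \<in> G" for g X
    unfolding f_def by (rule cSup_upper) (use bdd that in auto)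
  have f_le: "f X \<le> c" if "\<And>g. g\<in>G \<Longrightarrow> \<phi> g X \<le> c" for X c
    unfolding f_def using oneG that by (intro cSup_least) auto
  have lin: "ctrans g ** ((1-u) *\<^sub>R X + u *\<^sub>R Y) ** g = (1-u) *\<^sub>R (ctrans g ** X ** g) + u *\<^sub>R (ctrans g ** Y ** g)"
    for g X Y :: "'n cmat" and u :: real
    by (simp add: mm_simps)
  have dif: "ctrans g ** X ** g - ctrans g ** Y ** g = ctrans g ** (X - Y) ** g" for g X Y :: "'n cmat"
    by (simp add: mm_simps)
  have \<phi>conv: "\<phi> g ((1-u) *\<^sub>R X + u *\<^sub>R Y) = (1-u)*\<phi> g X + u*\<phi> g Y - u*(1-u)*norm (ctrans g ** (X - Y) ** g)^2"
    for g X Y u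
    unfolding \<phi>_def lin norm_sq_convex dif ..
  have convf: "convex_on UNIV f"
  proof (rule convex_onI)
    fix t :: real and x y assume t: "t > 0" "t < 1"
    show "f ((1 - t) *\<^sub>R x + t *\<^sub>R y) \<le> (1 - t) * f x + t * f y"
    proof (rule f_le)
      fix g assume g: "g \<in> G"
      have "\<phi> g ((1 - t) *\<^sub>R x + t *\<^sub>R y) \<le> (1-t)*\<phi> g x + t*\<phi> g y"
        unfolding \<phi>conv using t by simp
      also have "\<dots> \<le> (1 - t) * f x + t * f y"
        using t f_ge[OF g] by (intro add_mono mult_left_mono) auto
      finally show "\<phi> g ((1 - t) *\<^sub>R x + t *\<^sub>R y) \<le> (1 - t) * f x + t * f y" .
    qed
  qed simp
  have contf: "continuous_on UNIV f"
    by (rule convex_on_continuous[OF open_UNIV convf])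
  define Gen where "Gen = (\<lambda>g. ctrans g ** g) ` G"
  define C where "C = convex hull Gen"
  have "continuous_on G (\<lambda>g. ctrans g ** g)"
    by (intro bounded_bilinear.continuous_on[OF bounded_bilinear_mmult]
        bounded_linear.continuous_on[OF bounded_linear_ctrans] continuous_on_id)
  then have compC: "compact C"
    unfolding C_def Gen_def by (intro compact_convex_hull compact_continuous_image cG)
  have GenC: "Gen \<subseteq> C" unfolding C_def by (rule hull_subset)
  have convC: "convex C" unfolding C_def by simp
  have "mat 1 \<in> Gen" unfolding Gen_def using oneG by force
  then have neC: "C \<noteq> {}" using GenC by blast
  obtain S where S: "S \<in> C" "\<And>Y. Y \<in> C \<Longrightarrow> f S \<le> f Y"
    using continuous_attains_inf[OF compC neC continuous_on_subset[OF contf]] by auto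
  have Cinv: "ctrans h ** Y ** h \<in> C" if h: "h \<in> G" and Y: "Y \<in> C" for h Y
  proof -
    have "C \<subseteq> {Y. ctrans h ** Y ** h \<in> C}"
      unfolding C_def
    proof (rule hull_minimal)
      show "Gen \<subseteq> {Y. ctrans h ** Y ** h \<in> convex hull Gen}"
      proof
        fix Y assume "Y \<in> Gen"
        then obtain g where g: "g \<in> G" "Y = ctrans g ** g" unfolding Gen_def by auto
        have "ctrans h ** Y ** h = ctrans (g ** h) ** (g ** h)"
          using g by (simp add: ctrans_mult matrix_mul_assoc)
        moreover have "g ** h \<in> G" using mulG g h by blast
        ultimately have "ctrans h ** Y ** h \<in> Gen" unfolding Gen_def by blast
        then show "Y \<in> {Y. ctrans h ** Y ** h \<in> convex hull Gen}" using GenC C_def by auto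
      qed
      show "convex {Y. ctrans h ** Y ** h \<in> convex hull Gen}"
      proof (rule convexI)
        fix x y :: "'n cmat" and u v :: real
        assume xy: "x \<in> {Y. ctrans h ** Y ** h \<in> convex hull Gen}" "y \<in> {Y. ctrans h ** Y ** h \<in> convex hull Gen}"
          and uv: "0 \<le> u" "0 \<le> v" "u + v = 1"
        have "ctrans h ** (u *\<^sub>R x + v *\<^sub>R y) ** h = u *\<^sub>R (ctrans h ** x ** h) + v *\<^sub>R (ctrans h ** y ** h)"
          by (simp add: mm_simps)
        then show "u *\<^sub>R x + v *\<^sub>R y \<in> {Y. ctrans h ** Y ** h \<in> convex hull Gen}"
          using xy uv by (auto intro: convexD)
      qed
    qed
    then show ?thesis using Y by blast
  qed
  have uniq: "Y = S" if Y: "Y \<in> C" "f Y \<le> f S" for Y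
  proof (rule ccontr)
    assume ne: "Y \<noteq> S"
    define D where "D = Y - S"
    have nD: "norm D > 0" using ne unfolding D_def by simp
    define Z where "Z = (1 - 1/2) *\<^sub>R Y + (1/2::real) *\<^sub>R S"
    have ZC: "Z \<in> C" unfolding Z_def using convC Y S by (intro convexD) auto
    have "f Z \<le> (f Y + f S)/2 - (norm D/(K*K))^2/4"
    proof (rule f_le)
      fix g assume g: "g \<in> G"
      obtain h where h: "h \<in> G" "h ** g = mat 1" "g ** h = mat 1" using invG g by blast
      have "D = ctrans (g ** h) ** D ** (g ** h)" using h by simp
      also have "\<dots> = ctrans h ** (ctrans g ** D ** g) ** h" by (simp add: ctrans_mult matrix_mul_assoc)
      finally have "norm D \<le> K * K * norm (ctrans g ** D ** g)"
        using triple_bound[of h K "ctrans g ** D ** g"] K h by simp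
      then have "norm D / (K*K) \<le> norm (ctrans g ** D ** g)"
        using K by (simp add: divide_le_eq mult_ac)
      then have sq: "(norm D / (K*K))^2 \<le> norm (ctrans g ** D ** g) ^ 2"
        using K by (intro power_mono) auto
      have "\<phi> g Z = (1/2)*\<phi> g Y + (1/2)*\<phi> g S - (1/4) * norm (ctrans g ** D ** g)^2"
        unfolding Z_def \<phi>conv D_def by simp
      also have "\<dots> \<le> (f Y + f S)/2 - (norm D/(K*K))^2/4"
        by (rule aux_ineq[OF f_ge[OF g, of Y] f_ge[OF g, of S] sq])
      finally show "\<phi> g Z \<le> (f Y + f S)/2 - (norm D/(K*K))^2/4" .
    qed
    moreover have "(norm D/(K*K))^2 > 0" using nD K by simp
    ultimately have "f Z < f S" using Y(2) by (simp add: field_simps)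
    with S(2)[OF ZC] show False by simp
  qed
  have invS: "\<forall>g\<in>G. ctrans g ** S ** g = S"
  proof
    fix g assume g: "g \<in> G"
    show "ctrans g ** S ** g = S"
    proof (rule uniq)
      show "ctrans g ** S ** g \<in> C" by (rule Cinv[OF g S(1)])
      show "f (ctrans g ** S ** g) \<le> f S"
      proof (rule f_le)
        fix g' assume g': "g' \<in> G"
        have "\<phi> g' (ctrans g ** S ** g) = \<phi> (g ** g') S"
          unfolding \<phi>_def by (simp add: ctrans_mult matrix_mul_assoc)
        also have "\<dots> \<le> f S" using mulG g g' f_ge by blast
        finally show "\<phi> g' (ctrans g ** S ** g) \<le> f S" .
      qed
    qed
  qed
  define \<epsilon> where "\<epsilon> = 1 / (K*K)"
  have "C \<subseteq> {S. \<forall>X. \<epsilon> * norm X ^ 2 \<le> Re (trace (X ** S ** ctrans X))}"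
    unfolding C_def
  proof (rule hull_minimal)
    show "Gen \<subseteq> {S. \<forall>X. \<epsilon> * norm X ^ 2 \<le> Re (trace (X ** S ** ctrans X))}"
    proof (intro subsetI CollectI allI)
      fix Y X :: "'n cmat" assume "Y \<in> Gen"
      then obtain g where g: "g \<in> G" "Y = ctrans g ** g" unfolding Gen_def by auto
      obtain h where h: "h \<in> G" "h ** g = mat 1" "g ** h = mat 1" using invG g by blast
      have "X = X ** ctrans (h ** g)" using h by simp
      also have "\<dots> = (X ** ctrans g) ** ctrans h" by (simp add: ctrans_mult matrix_mul_assoc)
      finally have eqX: "X = (X ** ctrans g) ** ctrans h" .
      have "norm X \<le> norm (X ** ctrans g) * norm (ctrans h)"
        using norm_mult_le[of "X ** ctrans g" "ctrans h"] eqX by simp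
      also have "\<dots> \<le> norm (X ** ctrans g) * K"
        using K h by (simp add: mult_left_mono)
      finally have "norm X \<le> norm (X ** ctrans g) * K" .
      then have "norm X / K \<le> norm (X ** ctrans g)" using K by (simp add: divide_le_eq)
      then have "(norm X / K)^2 \<le> norm (X ** ctrans g) ^ 2" using K by (intro power_mono) auto
      also have "\<dots> = Re (trace ((X ** ctrans g) ** ctrans (X ** ctrans g)))" by (rule trace_frob[symmetric])
      also have "(X ** ctrans g) ** ctrans (X ** ctrans g) = X ** Y ** ctrans X"
        using g by (simp add: ctrans_mult matrix_mul_assoc)
      finally show "\<epsilon> * norm X ^ 2 \<le> Re (trace (X ** Y ** ctrans X))"
        unfolding \<epsilon>_def by (simp add: power_divide power2_eq_square)
    qed
    show "convex {S::'n cmat. \<forall>X. \<epsilon> * norm X ^ 2 \<le> Re (trace (X ** S ** ctrans X))}"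
    proof (rule convexI)
      fix x y :: "'n cmat" and u v :: real
      assume xy: "x \<in> {S. \<forall>X. \<epsilon> * norm X ^ 2 \<le> Re (trace (X ** S ** ctrans X))}"
        "y \<in> {S. \<forall>X. \<epsilon> * norm X ^ 2 \<le> Re (trace (X ** S ** ctrans X))}"
        and uv: "0 \<le> u" "0 \<le> v" "u + v = 1"
      show "u *\<^sub>R x + v *\<^sub>R y \<in> {S. \<forall>X. \<epsilon> * norm X ^ 2 \<le> Re (trace (X ** S ** ctrans X))}"
      proof -
        have "\<forall>X. \<epsilon> * norm X ^ 2 \<le> Re (trace (X ** (u *\<^sub>R x + v *\<^sub>R y) ** ctrans X))"
        proof
        fix X :: "'n cmat"
        have "Re (trace (X ** (u *\<^sub>R x + v *\<^sub>R y) ** ctrans X)) =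
              u * Re (trace (X ** x ** ctrans X)) + v * Re (trace (X ** y ** ctrans X))"
          by (simp add: mm_simps trace_add trace_scaleR)
        moreover have "u * (\<epsilon> * norm X ^ 2) \<le> u * Re (trace (X ** x ** ctrans X))"
          using xy uv by (intro mult_left_mono) auto
        moreover have "v * (\<epsilon> * norm X ^ 2) \<le> v * Re (trace (X ** y ** ctrans X))"
          using xy uv by (intro mult_left_mono) auto
        moreover have "\<epsilon> * norm X ^ 2 = u * (\<epsilon> * norm X ^ 2) + v * (\<epsilon> * norm X ^ 2)"
          using uv(3) by (metis distrib_right mult_1)
        ultimately show "\<epsilon> * norm X ^ 2 \<le> Re (trace (X ** (u *\<^sub>R x + v *\<^sub>R y) ** ctrans X))"
          by linarith
      qed
      then show ?thesis by simp
      qed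
    qed
  qed
  then have "\<forall>X. \<epsilon> * norm X ^ 2 \<le> Re (trace (X ** S ** ctrans X))" using S(1) by blast
  moreover have "\<epsilon> > 0" unfolding \<epsilon>_def using K by simp
  ultimately show ?thesis using invS by blast
qed

lemma mpow_scale: "mpow (t *\<^sub>R (A::'n::finite cmat)) k = t ^ k *\<^sub>R mpow A k"
  by (induction k) (simp_all add: scalar_matrix_assoc[symmetric] matrix_scalar_ac)

lemma norm_mpow: "norm (mpow (A::'n::finite cmat) k) \<le> norm A ^ k * norm (mat 1 :: 'n cmat)"
proof (induction k)
  case (Suc k)
  have "norm (mpow A (Suc k)) \<le> norm A * norm (mpow A k)" by (simp add: norm_mult_le)
  also have "\<dots> \<le> norm A * (norm A ^ k * norm (mat 1 :: 'n cmat))"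
    using Suc by (intro mult_left_mono) auto
  finally show ?case by (simp add: mult_ac)
qed simp

lemma mexp_expand:
  fixes A :: "'n::finite cmat"
  shows "\<exists>C. \<forall>t. \<bar>t\<bar> \<le> 1 \<longrightarrow> norm (mexp (t *\<^sub>R A) - mat 1 - t *\<^sub>R A) \<le> C * t^2"
proof -
  define nI where "nI = norm (mat 1 :: 'n cmat)"
  define a where "a = norm A"
  have a0: "a \<ge> 0" unfolding a_def by simp
  have nI0: "nI \<ge> 0" unfolding nI_def by simp
  define e where "e = (\<Sum>n. inverse (fact n) * a ^ n)"
  have se: "summable (\<lambda>n. inverse (fact n) * a ^ n)" by (rule summable_exp)
  define C where "C = nI * a^2 * e"
  have "norm (mexp (t *\<^sub>R A) - mat 1 - t *\<^sub>R A) \<le> C * t^2" if t: "\<bar>t\<bar> \<le> 1" for t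
  proof -
    define f where "f k = inverse (fact k) *\<^sub>R mpow (t *\<^sub>R A) k" for k
    have nf: "norm (f k) \<le> nI * (inverse (fact k) * (\<bar>t\<bar> * a) ^ k)" for k
    proof -
      have "norm (f k) = inverse (fact k) * \<bar>t\<bar> ^ k * norm (mpow A k)"
        unfolding f_def mpow_scale by (simp add: power_abs abs_mult)
      also have "\<dots> \<le> inverse (fact k) * \<bar>t\<bar> ^ k * (a ^ k * nI)"
        unfolding a_def nI_def by (intro mult_left_mono norm_mpow) auto
      finally show ?thesis by (simp add: power_mult_distrib mult_ac)
    qed
    have sf: "summable f"
      by (rule summable_comparison_test[OF _ summable_mult[OF summable_exp]]) (use nf in blast)
    have nf2: "norm (f (n + 2)) \<le> t^2 * (nI * a^2) * (inverse (fact n) * a ^ n)" for n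
    proof -
      have "norm (f (n+2)) \<le> nI * (inverse (fact (n+2)) * (\<bar>t\<bar> * a) ^ (n+2))" by (rule nf)
      also have "\<dots> \<le> nI * (inverse (fact n) * (t^2 * a^2 * a ^ n))"
      proof (intro mult_left_mono mult_mono nI0)
        show "inverse (fact (n + 2)) \<le> (inverse (fact n) :: real)"
        proof -
          have "fact n \<le> (fact (n+2)::real)" by (rule fact_mono) simp
          then show ?thesis by (rule le_imp_inverse_le) simp
        qed
        have "\<bar>t\<bar> ^ n \<le> 1" using t by (simp add: power_le_one)
        have "\<bar>t\<bar> ^ (n+2) = \<bar>t\<bar> ^ n * t^2" by (subst power_add) simp
        also have "\<dots> \<le> 1 * t^2" by (rule mult_right_mono) (use \<open>\<bar>t\<bar> ^ n \<le> 1\<close> in simp_all)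
        finally have "\<bar>t\<bar> ^ (n+2) \<le> t^2" by simp
        then show "(\<bar>t\<bar> * a) ^ (n + 2) \<le> t\<^sup>2 * a\<^sup>2 * a ^ n"
        proof -
          have "(\<bar>t\<bar> * a) ^ (n + 2) = \<bar>t\<bar> ^ (n+2) * (a^2 * a^n)"
            by (simp only: power_mult_distrib power_add mult_ac)
          also have "\<dots> \<le> t^2 * (a^2 * a^n)"
            by (rule mult_right_mono) (use \<open>\<bar>t\<bar> ^ (n+2) \<le> t^2\<close> a0 in simp_all)
          finally show ?thesis by (simp add: mult_ac)
        qed
      qed (auto simp: a0)
      finally show ?thesis by (simp add: mult_ac)
    qed
    have sn: "summable (\<lambda>n. norm (f (n + 2)))"
      by (rule summable_comparison_test[OF _ summable_mult[OF se]]) (use nf2 in auto)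
    have "mexp (t *\<^sub>R A) = (\<Sum>n. f (n + 2)) + (\<Sum>i<2. f i)"
      unfolding mexp_def f_def[symmetric] by (rule suminf_split_initial_segment[OF sf])
    also have "(\<Sum>i<2. f i) = mat 1 + t *\<^sub>R A"
      by (simp add: f_def numeral_2_eq_2)
    finally have "mexp (t *\<^sub>R A) - mat 1 - t *\<^sub>R A = (\<Sum>n. f (n + 2))" by simp
    then have "norm (mexp (t *\<^sub>R A) - mat 1 - t *\<^sub>R A) \<le> (\<Sum>n. norm (f (n + 2)))"
      using summable_norm[OF sn] by simp
    also have "\<dots> \<le> (\<Sum>n. t^2 * (nI * a^2) * (inverse (fact n) * a ^ n))"
      by (rule suminf_le[OF nf2 sn summable_mult[OF se]])
    also have "\<dots> = C * t^2"
      unfolding suminf_mult[OF se] C_def e_def by (simp add: mult_ac)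
    finally show ?thesis .
  qed
  then show ?thesis by blast
qed

lemma expand_identity:
  fixes A S R :: "'n::finite cmat"
  shows "ctrans (mat 1 + t *\<^sub>R A + R) ** S ** (mat 1 + t *\<^sub>R A + R) =
    S + t *\<^sub>R (ctrans A ** S + S ** A) +
    ((t*t) *\<^sub>R (ctrans A ** S ** A) + (mat 1 + t *\<^sub>R ctrans A) ** S ** R + ctrans R ** S ** (mat 1 + t *\<^sub>R A + R))"
  by (simp add: mm_simps algebra_simps)

lemma norm_mult3: "norm ((X::'n::finite cmat) ** (Y::'n cmat) ** (Z::'n cmat)) \<le> norm X * norm Y * norm Z"
proof -
  have "norm (X**Y**Z) \<le> norm (X**Y) * norm Z" by (rule norm_mult_le)
  also have "\<dots> \<le> norm X * norm Y * norm Z" by (rule mult_right_mono[OF norm_mult_le]) simp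
  finally show ?thesis .
qed

lemma infinitesimal:
  fixes A S :: "'n::finite cmat" and E :: "real \<Rightarrow> 'n cmat"
  assumes exp: "\<forall>t. \<bar>t\<bar> \<le> 1 \<longrightarrow> norm (E t - mat 1 - t *\<^sub>R A) \<le> C * t^2"
    and inv: "\<forall>t. ctrans (E t) ** S ** E t = S"
  shows "ctrans A ** S + S ** A = 0"
proof (rule ccontr)
  define D where "D = ctrans A ** S + S ** A"
  assume "ctrans A ** S + S ** A \<noteq> 0"
  then have nD: "norm D > 0" unfolding D_def by simp
  define nI where "nI = norm (mat 1 :: 'n cmat)"
  have "norm (E 1 - mat 1 - 1 *\<^sub>R A) \<le> C" using exp[rule_format, of 1] by simp
  then have C0: "C \<ge> 0" by (meson norm_ge_zero order_trans)
  define K0 where "K0 = norm A * norm A * norm S + (nI + norm A) * norm S * C + C * norm S * (nI + norm A + C)"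
  have nI0: "nI \<ge> 0" unfolding nI_def by simp
  have K00: "K0 \<ge> 0" unfolding K0_def nI_def using C0 by simp
  have bound: "t * norm D \<le> K0 * t^2" if t: "0 < t" "t \<le> 1" for t
  proof -
    define R where "R = E t - mat 1 - t *\<^sub>R A"
    have nR: "norm R \<le> C * t^2" using exp t unfolding R_def by simp
    have Eeq: "E t = mat 1 + t *\<^sub>R A + R" unfolding R_def by simp
    define W where "W = (t*t) *\<^sub>R (ctrans A ** S ** A) + (mat 1 + t *\<^sub>R ctrans A) ** S ** R + ctrans R ** S ** (mat 1 + t *\<^sub>R A + R)"
    have "S = S + t *\<^sub>R D + W"
      using inv[rule_format, of t] unfolding Eeq expand_identity D_def W_def by simp
    then have "t *\<^sub>R D + W = 0" by (simp add: add.assoc)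
    then have tD: "t *\<^sub>R D = - W" by (simp add: eq_neg_iff_add_eq_0)
    have t2: "t^2 \<le> 1" using t by (simp add: power_le_one)
    have n1: "norm ((t*t) *\<^sub>R (ctrans A ** S ** A)) \<le> t^2 * (norm A * norm S * norm A)"
    proof -
      have "norm (ctrans A ** S ** A) \<le> norm A * norm S * norm A"
        using norm_mult3 by (metis norm_ctrans)
      then show ?thesis using t by (simp add: power2_eq_square mult_left_mono)
    qed
    have n2: "norm ((mat 1 + t *\<^sub>R ctrans A) ** S ** R) \<le> (nI + norm A) * norm S * (C * t^2)"
    proof -
      have a: "norm (mat 1 + t *\<^sub>R ctrans A) \<le> nI + norm A"
        unfolding nI_def using t by (intro order_trans[OF norm_triangle_ineq]) (simp add: mult_left_le_one_le)
      have "norm ((mat 1 + t *\<^sub>R ctrans A) ** S ** R) \<le> norm (mat 1 + t *\<^sub>R ctrans A) * norm S * norm R"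
        by (rule norm_mult3)
      also have "\<dots> \<le> (nI + norm A) * norm S * (C * t^2)"
        using a nR nI0 t C0 by (intro mult_mono) auto
      finally show ?thesis .
    qed
    have n3: "norm (ctrans R ** S ** (mat 1 + t *\<^sub>R A + R)) \<le> (C * t^2) * norm S * (nI + norm A + C)"
    proof -
      have a: "norm (mat 1 + t *\<^sub>R A + R) \<le> nI + norm A + C"
      proof -
        have "norm (mat 1 + t *\<^sub>R A + R) \<le> norm (mat 1 + t *\<^sub>R A) + norm R" by (rule norm_triangle_ineq)
        also have "\<dots> \<le> (nI + norm A) + C"
        proof (rule add_mono)
          show "norm (mat 1 + t *\<^sub>R A) \<le> nI + norm A"
            unfolding nI_def using t by (intro order_trans[OF norm_triangle_ineq]) (simp add: mult_left_le_one_le)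
          show "norm R \<le> C" using nR t2 C0 by (smt (verit) mult_left_le)
        qed
        finally show ?thesis by simp
      qed
      have "norm (ctrans R ** S ** (mat 1 + t *\<^sub>R A + R)) \<le> norm R * norm S * norm (mat 1 + t *\<^sub>R A + R)"
        using norm_mult3 by (metis norm_ctrans)
      also have "\<dots> \<le> (C * t^2) * norm S * (nI + norm A + C)"
        using a nR nI0 t C0 by (intro mult_mono) auto
      finally show ?thesis .
    qed
    have "norm (t *\<^sub>R D) = norm W" using tD by simp
    then have "t * norm D = norm W" using t by simp
    also have "\<dots> \<le> t^2 * (norm A * norm S * norm A) + (nI + norm A) * norm S * (C * t^2) + (C * t^2) * norm S * (nI + norm A + C)"
    proof -
      have "norm W \<le> norm ((t*t) *\<^sub>R (ctrans A ** S ** A)) + norm ((mat 1 + t *\<^sub>R ctrans A) ** S ** R) + norm (ctrans R ** S ** (mat 1 + t *\<^sub>R A + R))"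
        unfolding W_def by (rule order_trans[OF norm_triangle_ineq add_right_mono[OF norm_triangle_ineq]])
      then show ?thesis using n1 n2 n3 by linarith
    qed
    also have "\<dots> = K0 * t^2" unfolding K0_def by (simp add: algebra_simps)
    finally show ?thesis .
  qed
  define t where "t = min 1 (norm D / (2 * (K0 + 1)))"
  have t: "0 < t" "t \<le> 1" unfolding t_def using nD K00 by auto
  have "t * norm D \<le> K0 * t^2" by (rule bound[OF t])
  then have "norm D \<le> K0 * t" using t by (simp add: power2_eq_square mult_ac)
  also have "\<dots> \<le> K0 * (norm D / (2 * (K0 + 1)))" unfolding t_def using K00 by (intro mult_left_mono) auto
  also have "\<dots> = norm D * (K0 / (2 * (K0 + 1)))" by simp
  also have "\<dots> < norm D * 1"
    by (rule mult_strict_left_mono) (use nD K00 in \<open>simp_all add: field_simps\<close>)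
  also have "\<dots> = norm D" by simp
  finally show False by simp
qed

lemma lie_S:
  assumes invS: "\<forall>g\<in>G. ctrans g ** S ** g = S" and A: "A \<in> lie_algebra G"
  shows "ctrans A ** S + S ** (A::'n::finite cmat) = 0"
proof -
  obtain C where C: "\<forall>t. \<bar>t\<bar> \<le> 1 \<longrightarrow> norm (mexp (t *\<^sub>R A) - mat 1 - t *\<^sub>R A) \<le> C * t^2"
    using mexp_expand by blast
  have "\<forall>t. ctrans (mexp (t *\<^sub>R A)) ** S ** mexp (t *\<^sub>R A) = S"
    using A invS unfolding lie_algebra_def by blast
  then show ?thesis by (rule infinitesimal[OF C])
qed

lemma lie_T:
  assumes invT: "\<forall>g\<in>G. g ** T ** ctrans g = T" and A: "A \<in> lie_algebra G"
  shows "A ** T + T ** ctrans (A::'n::finite cmat) = 0"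
proof -
  obtain C where C: "\<forall>t. \<bar>t\<bar> \<le> 1 \<longrightarrow> norm (mexp (t *\<^sub>R A) - mat 1 - t *\<^sub>R A) \<le> C * t^2"
    using mexp_expand by blast
  have C': "\<forall>t. \<bar>t\<bar> \<le> 1 \<longrightarrow> norm (ctrans (mexp (t *\<^sub>R A)) - mat 1 - t *\<^sub>R ctrans A) \<le> C * t^2"
  proof (intro allI impI)
    fix t :: real assume "\<bar>t\<bar> \<le> 1"
    then have "norm (mexp (t *\<^sub>R A) - mat 1 - t *\<^sub>R A) \<le> C * t^2" using C by simp
    moreover have "ctrans (mexp (t *\<^sub>R A)) - mat 1 - t *\<^sub>R ctrans A = ctrans (mexp (t *\<^sub>R A) - mat 1 - t *\<^sub>R A)" by simp
    ultimately show "norm (ctrans (mexp (t *\<^sub>R A)) - mat 1 - t *\<^sub>R ctrans A) \<le> C * t^2" by (simp only: norm_ctrans)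
  qed
  have "\<forall>t. ctrans (ctrans (mexp (t *\<^sub>R A))) ** T ** ctrans (mexp (t *\<^sub>R A)) = T"
    using A invT unfolding lie_algebra_def by simp
  from infinitesimal[OF C' this] show ?thesis by simp
qed

lemma midpoint_quad:
  fixes X T \<beta> :: "'n::finite cmat"
  assumes "\<beta> ** T + T ** ctrans \<beta> = 0"
  shows "(X + X ** \<beta>) ** T ** ctrans (X + X ** \<beta>) = (X - X ** \<beta>) ** T ** ctrans (X - X ** \<beta>)"
proof -
  have e1: "X + X ** \<beta> = X ** (mat 1 + \<beta>)" by (simp add: matrix_add_ldistrib)
  have e2: "X - X ** \<beta> = X ** (mat 1 - \<beta>)" by (simp add: matrix_diff_ldistrib)
  have d: "(mat 1 + \<beta>) ** T ** ctrans (mat 1 + \<beta>) - (mat 1 - \<beta>) ** T ** ctrans (mat 1 - \<beta>)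
        = 2 *\<^sub>R (\<beta> ** T + T ** ctrans \<beta>)"
    by (simp add: mm_simps algebra_simps scaleR_2)
  then have m: "(mat 1 + \<beta>) ** T ** ctrans (mat 1 + \<beta>) = (mat 1 - \<beta>) ** T ** ctrans (mat 1 - \<beta>)"
    using assms by simp
  have "(X + X ** \<beta>) ** T ** ctrans (X + X ** \<beta>) = X ** ((mat 1 + \<beta>) ** T ** ctrans (mat 1 + \<beta>)) ** ctrans X"
    unfolding e1 ctrans_mult by (simp only: matrix_mul_assoc)
  also have "\<dots> = X ** ((mat 1 - \<beta>) ** T ** ctrans (mat 1 - \<beta>)) ** ctrans X" by (simp only: m)
  also have "\<dots> = (X - X ** \<beta>) ** T ** ctrans (X - X ** \<beta>)"
    unfolding e2 ctrans_mult by (simp only: matrix_mul_assoc)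
  finally show ?thesis .
qed

definition LT :: "'n::finite cmat \<Rightarrow> 'n cmat \<Rightarrow> bool" where
  "LT T X \<longleftrightarrow> X ** T + T ** ctrans X = 0"

lemma LT_add: "LT T X \<Longrightarrow> LT T Y \<Longrightarrow> LT T (X + Y)"
proof -
  assume a: "LT T X" "LT T Y"
  have "(X + Y) ** T + T ** ctrans (X + Y) = (X ** T + T ** ctrans X) + (Y ** T + T ** ctrans Y)"
    by (simp add: matrix_add_rdistrib matrix_add_ldistrib algebra_simps)
  then show ?thesis using a unfolding LT_def by simp
qed

lemma LT_scale: "LT T X \<Longrightarrow> LT T (r *\<^sub>R X)"
proof -
  assume a: "LT T X"
  have "(r *\<^sub>R X) ** T + T ** ctrans (r *\<^sub>R X) = r *\<^sub>R (X ** T + T ** ctrans X)"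
    by (simp add: scalar_matrix_assoc[symmetric] matrix_scalar_ac scaleR_add_right)
  then show ?thesis using a unfolding LT_def by simp
qed

lemma LT_zero: "LT T 0"
  unfolding LT_def by simp

lemma LT_sum: "(\<And>i. i \<in> I \<Longrightarrow> LT T (X i)) \<Longrightarrow> LT T (sum X I)"
  by (induction I rule: infinite_finite_induct) (auto intro: LT_add LT_zero)

lemma LT_comb:
  assumes "\<forall>i\<in>insert 0 {1..M}. LT T (X i)"
  shows "LT T ((1/4) *\<^sub>R (h *\<^sub>R X 0 + (\<Sum>i\<in>{1..M}. z i *\<^sub>R X i)))"
  using assms by (intro LT_scale LT_add LT_sum) auto

lemma step_inv:
  assumes ms: "midpoint_step J c gradH M h zeta Q P Q' P'"
    and LTq: "\<forall>i\<le>M. \<forall>X. LT T (gradH i X)"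
    and LTp: "\<forall>i\<le>M. \<forall>X. LT S (ctrans (gradH i X))"
  shows "Q' ** T ** ctrans Q' = Q ** T ** ctrans Q \<and> P' ** S ** ctrans P' = P ** S ** ctrans P"
proof -
  obtain Qt Pt where
    hQ: "Q = Qt - (1/2) *\<^sub>R (h *\<^sub>R fvec J c gradH 0 Qt Pt + (\<Sum>i\<in>{1..M}. (zeta i * sqrt h) *\<^sub>R fvec J c gradH i Qt Pt))"
    and hP: "P = Pt - (1/2) *\<^sub>R (h *\<^sub>R kvec J c gradH 0 Qt Pt + (\<Sum>i\<in>{1..M}. (zeta i * sqrt h) *\<^sub>R kvec J c gradH i Qt Pt))"
    and hQ': "Q' = Qt + (1/2) *\<^sub>R (h *\<^sub>R fvec J c gradH 0 Qt Pt + (\<Sum>i\<in>{1..M}. (zeta i * sqrt h) *\<^sub>R fvec J c gradH i Qt Pt))"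
    and hP': "P' = Pt + (1/2) *\<^sub>R (h *\<^sub>R kvec J c gradH 0 Qt Pt + (\<Sum>i\<in>{1..M}. (zeta i * sqrt h) *\<^sub>R kvec J c gradH i Qt Pt))"
    using ms unfolding midpoint_step_def Let_def by blast
  define g where "g i = gradH i (momentum J c Qt Pt)" for i
  define \<beta> where "\<beta> = (1/4) *\<^sub>R (h *\<^sub>R g 0 + (\<Sum>i\<in>{1..M}. (zeta i * sqrt h) *\<^sub>R g i))"
  have Fe: "(1/2) *\<^sub>R (h *\<^sub>R fvec J c gradH 0 Qt Pt + (\<Sum>i\<in>{1..M}. (zeta i * sqrt h) *\<^sub>R fvec J c gradH i Qt Pt)) = Qt ** \<beta>"
    unfolding fvec_def \<beta>_def g_def
    by (simp add: matrix_add_ldistrib matrix_sum_r matrix_scalar_ac scalar_matrix_assoc[symmetric]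
        scaleR_sum_right scaleR_add_right)
  have Ke: "(1/2) *\<^sub>R (h *\<^sub>R kvec J c gradH 0 Qt Pt + (\<Sum>i\<in>{1..M}. (zeta i * sqrt h) *\<^sub>R kvec J c gradH i Qt Pt)) = - (Pt ** ctrans \<beta>)"
    unfolding kvec_def \<beta>_def g_def
    by (simp add: matrix_add_ldistrib matrix_sum_r matrix_scalar_ac scalar_matrix_assoc[symmetric]
        scaleR_sum_right scaleR_add_right scaleR_diff_right ctrans_sum sum_negf)
  have ctb: "ctrans \<beta> = (1/4) *\<^sub>R (h *\<^sub>R ctrans (g 0) + (\<Sum>i\<in>{1..M}. (zeta i * sqrt h) *\<^sub>R ctrans (g i)))"
    unfolding \<beta>_def by (simp add: ctrans_sum)
  have LTb: "LT T \<beta>" unfolding \<beta>_def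
    by (rule LT_comb) (use LTq g_def in auto)
  have LTcb: "LT S (ctrans \<beta>)" unfolding ctb
    by (rule LT_comb[where X="\<lambda>i. ctrans (g i)"]) (use LTp g_def in auto)
  have "Q' ** T ** ctrans Q' = Q ** T ** ctrans Q"
    unfolding hQ hQ' Fe using midpoint_quad[of \<beta> T Qt] LTb unfolding LT_def by simp
  moreover have "P' ** S ** ctrans P' = P ** S ** ctrans P"
    unfolding hP hP' Ke using midpoint_quad[of "ctrans \<beta>" S Pt] LTcb unfolding LT_def by simp
  ultimately show ?thesis by blast
qed

theorem lemma5p1:
  fixes G :: "'n::finite cmat set"
    and J :: "'n cmat" and c :: real
    and M :: nat and H :: "nat \<Rightarrow> 'n cmat \<Rightarrow> real" and gradH :: "nat \<Rightarrow> 'n cmat \<Rightarrow> 'n cmat"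
    and l :: nat
    and PS :: "'a measure" and W :: "nat \<Rightarrow> real \<Rightarrow> 'a \<Rightarrow> real"
    and Q0 P0 :: "'n cmat"
  assumes G_lie: "matrix_lie_group G"
    and G_compact: "compact G"
    and G_sc: "simply_connected G"
    and J_sym: "ctrans J = J \<or> ctrans J = - J"
    and J_sq: "J ** J = c *\<^sub>R mat 1" and c_nz: "c \<noteq> 0"
    and J_quad: "\<forall>A\<in>lie_algebra G. ctrans A ** J + J ** A = 0"
    and grad: "\<forall>i\<le>M. \<forall>X. gradH i X \<in> lie_algebra G \<and>
                 ((\<lambda>V. H i (X + V)) has_derivative (\<lambda>V. Re (frob (gradH i X) V)))
                   (at 0 within lie_algebra G)"
    and l_pos: "l \<ge> 1"
    and BM: "indep_brownian PS M W"
    and init: "Q0 \<in> G"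
  shows "\<exists>R::real. AE \<omega> in PS. \<forall>h>0. \<forall>Q P.
           integrator_seq J c gradH M l W h \<omega> Q P \<and> Q 0 = Q0 \<and> P 0 = P0 \<longrightarrow>
           (\<forall>n. norm (Q n, P n) \<le> R)"
proof -
  have Ginv: "G \<subseteq> {A. invertible A}" and oneG: "mat 1 \<in> G"
    and mulG: "\<forall>g\<in>G. \<forall>h\<in>G. g ** h \<in> G" and invclG: "\<forall>g\<in>G. matrix_inv g \<in> G"
    using G_lie unfolding matrix_lie_group_def by auto
  have mi: "g ** matrix_inv g = mat 1 \<and> matrix_inv g ** g = mat 1" if "g \<in> G" for g
  proof -
    have "\<exists>A'. g ** A' = mat 1 \<and> A' ** g = mat 1" using Ginv that unfolding invertible_def by blast
    then show ?thesis unfolding matrix_inv_def by (rule someI_ex)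
  qed
  have invG: "\<forall>g\<in>G. \<exists>h\<in>G. h ** g = mat 1 \<and> g ** h = mat 1"
    using mi invclG by blast
  obtain S \<epsilon>S where S: "\<epsilon>S > 0" "\<forall>g\<in>G. ctrans g ** S ** g = S"
    "\<forall>X. \<epsilon>S * norm X ^ 2 \<le> Re (trace (X ** S ** ctrans X))"
    using invariant_form[OF G_compact oneG mulG invG] by blast
  have cG': "compact (ctrans ` G)"
    by (rule compact_continuous_image[OF linear_continuous_on[OF bounded_linear_ctrans] G_compact])
  have oneG': "mat 1 \<in> ctrans ` G" using oneG by (metis ctrans_mat1 image_eqI)
  have mulG': "\<forall>g\<in>ctrans ` G. \<forall>h\<in>ctrans ` G. g ** h \<in> ctrans ` G"
  proof (intro ballI)
    fix g h assume "g \<in> ctrans ` G" "h \<in> ctrans ` G"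
    then obtain g0 h0 where "g0 \<in> G" "h0 \<in> G" "g = ctrans g0" "h = ctrans h0" by blast
    then show "g ** h \<in> ctrans ` G" using mulG by (metis ctrans_mult image_eqI)
  qed
  have invG': "\<forall>g\<in>ctrans ` G. \<exists>h\<in>ctrans ` G. h ** g = mat 1 \<and> g ** h = mat 1"
  proof
    fix g assume "g \<in> ctrans ` G"
    then obtain g0 where g0: "g0 \<in> G" "g = ctrans g0" by blast
    have "ctrans (matrix_inv g0) ** g = mat 1 \<and> g ** ctrans (matrix_inv g0) = mat 1"
      using mi[OF g0(1)] g0(2) by (metis ctrans_mult ctrans_mat1)
    moreover have "ctrans (matrix_inv g0) \<in> ctrans ` G" using invclG g0 by blast
    ultimately show "\<exists>h\<in>ctrans ` G. h ** g = mat 1 \<and> g ** h = mat 1" by blast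
  qed
  obtain T \<epsilon>T where T: "\<epsilon>T > 0" "\<forall>g\<in>ctrans ` G. ctrans g ** T ** g = T"
    "\<forall>X. \<epsilon>T * norm X ^ 2 \<le> Re (trace (X ** T ** ctrans X))"
    using invariant_form[OF cG' oneG' mulG' invG'] by blast
  have invT: "\<forall>g\<in>G. g ** T ** ctrans g = T"
    using T(2) by (metis ctrans_ctrans image_eqI)
  have LTq: "\<forall>i\<le>M. \<forall>X. LT T (gradH i X)"
    using grad lie_T[OF invT] unfolding LT_def by blast
  have LTp: "\<forall>i\<le>M. \<forall>X. LT S (ctrans (gradH i X))"
    using grad lie_S[OF S(2)] unfolding LT_def by simp
  define a where "a = Re (trace (Q0 ** T ** ctrans Q0))"
  define b where "b = Re (trace (P0 ** S ** ctrans P0))"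
  define R where "R = sqrt (a / \<epsilon>T + b / \<epsilon>S)"
  have main: "norm (Q n, P n) \<le> R"
    if seq: "integrator_seq J c gradH M l W h \<omega> Q P" and i0: "Q 0 = Q0" "P 0 = P0" for h \<omega> Q P n
  proof -
    have inv: "Q n ** T ** ctrans (Q n) = Q0 ** T ** ctrans Q0 \<and> P n ** S ** ctrans (P n) = P0 ** S ** ctrans P0"
    proof (induction n)
      case 0 then show ?case using i0 by simp
    next
      case (Suc n)
      have "midpoint_step J c gradH M h (trunc_noise l W h \<omega> n) (Q n) (P n) (Q (Suc n)) (P (Suc n))"
        using seq unfolding integrator_seq_def by blast
      from step_inv[OF this LTq LTp] Suc show ?case by simp
    qed
    have q: "norm (Q n) ^ 2 \<le> a / \<epsilon>T"
      using T(3)[rule_format, of "Q n"] inv T(1) unfolding a_def by (simp add: field_simps)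
    have p: "norm (P n) ^ 2 \<le> b / \<epsilon>S"
      using S(3)[rule_format, of "P n"] inv S(1) unfolding b_def by (simp add: field_simps)
    have "norm (Q n, P n) = sqrt (norm (Q n) ^ 2 + norm (P n) ^ 2)" by (simp add: norm_prod_def)
    also have "\<dots> \<le> R" unfolding R_def using q p by (intro real_sqrt_le_mono) linarith
    finally show ?thesis .
  qed
  show ?thesis
    by (rule exI[where x=R], rule AE_I2) (use main in blast)
qed

end
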